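(* Let $p(x)$, $q(x)$, $r(x)$ be probability mass functions on the same finite support set $\mathcal{X}$. Let $c_1=\min_{x\in\mathcal{X}}\frac{p(x)(1-p(x))}{3(1+p(x))^2}$ and $p_m=\min_{x}p(x)$, and assume $c_1>0$ and $p_m>0$. Suppose $D_{\mathsf{KL}}(p\|q)\le\tau\le c_1$ and that for all $x\in\mathcal{X}$, $\gamma_1\le \frac{p(x)}{r(x)}\le\gamma_2$. Then for all $x\in\mathcal{X}$, with $g(\tau,p_m)=\sqrt{3\tau/p_m}$, \[ \gamma_1\exp\big(-g(\tau,p_m)\big)\le\frac{q(x)}{r(x)}\le\gamma_2\exp\big(g(\tau,p_m)\big). \]
   Context: $D_{\mathsf{KL}}(p\|q)=\sum_x p(x)\log\frac{p(x)}{q(x)}$ is the Kullback–Leibler divergence. *)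

theory Defs
  imports Complex_Main
begin

definition is_pmf_on :: "'a set \<Rightarrow> ('a \<Rightarrow> real) \<Rightarrow> bool" where
  "is_pmf_on X p \<longleftrightarrow> finite X \<and> (\<forall>x\<in>X. p x > 0) \<and> (\<Sum>x\<in>X. p x) = 1"

definition KL :: "'a set \<Rightarrow> ('a \<Rightarrow> real) \<Rightarrow> ('a \<Rightarrow> real) \<Rightarrow> real" where
  "KL X p q = (\<Sum>x\<in>X. p x * ln (p x / q x))"

end

theory Submission imports Defs begin

lemma mono_helper:
  fixes g g' :: "real \<Rightarrow> real"
  assumes "a \<le> b" "\<And>y. a \<le> y \<Longrightarrow> y \<le> b \<Longrightarrow> (g has_real_derivative g' y) (at y)"
    "\<And>y. a \<le> y \<Longrightarrow> y \<le> b \<Longrightarrow> g' y \<ge> 0"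
  shows "g a \<le> g b"
  using DERIV_nonneg_imp_nondecreasing[of a b g] assms by blast

lemma exp_neg_upper:
  fixes v :: real assumes "0 \<le> v"
  shows "exp (-v) \<le> 1 - v + v^2/2"
proof -
  have "(\<lambda>v. 1 - v + v^2/2 - exp (-v)) 0 \<le> (\<lambda>v. 1 - v + v^2/2 - exp (-v)) v"
  proof (rule mono_helper[OF assms, where g'="\<lambda>v. -1 + v + exp (-v)"])
    fix y :: real
    show "((\<lambda>v. 1 - v + v^2/2 - exp (-v)) has_real_derivative -1 + y + exp (-y)) (at y)"
      by (auto intro!: derivative_eq_intros simp: power2_eq_square)
    show "0 \<le> -1 + y + exp (-y)" using exp_ge_add_one_self[of "-y"] by simp
  qed
  then show ?thesis by simp
qed

definition F :: "real \<Rightarrow> real \<Rightarrow> real" where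
  "F a t = - a * t + (1 - a) * (ln (1 - a) - ln (1 - a * exp t))"

lemma F_zero: "F a 0 = 0" unfolding F_def by simp

lemma F_deriv: assumes "a * exp y < 1"
  shows "(F a has_real_derivative a*(exp y - 1)/(1 - a*exp y)) (at y)"
proof -
  have p: "0 < 1 - a * exp y" using assms by simp
  have "(F a has_real_derivative -a + (1-a) * (0 - (0 - a * exp y) / (1 - a * exp y))) (at y)"
    unfolding F_def using p
    by (auto intro!: derivative_eq_intros)
  moreover have "-a + (1-a) * (0 - (0 - a * exp y) / (1 - a * exp y)) = a*(exp y - 1)/(1 - a*exp y)"
    using p by (simp add: field_simps)
  ultimately show ?thesis by simp
qed

lemma frac_ge: fixes a e :: real
  assumes "0 < a" "a < 1" "0 < e" "e \<le> 1"
  shows "a * (1 - e) / (1 - a * e) \<ge> a * (1 - e)"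
proof -
  have "a * e \<le> a" using assms mult_left_le[of e a] by simp
  moreover have "0 \<le> a * e" using assms by simp
  ultimately have d: "0 < 1 - a * e" "1 - a * e \<le> 1" using assms by linarith+
  have "0 \<le> a * (1 - e)" using assms by simp
  then show ?thesis using d by (simp add: le_divide_eq mult_left_le)
qed

lemma F_pos:
  fixes a t :: real
  assumes a: "0 < a" "a < 1" and t: "0 \<le> t" "a * exp t < 1"
  shows "F a t \<ge> a * t^2 / 2"
proof -
  have "(\<lambda>s. F a s - a * s^2/2) 0 \<le> (\<lambda>s. F a s - a * s^2/2) t"
  proof (rule mono_helper[OF t(1), where g'="\<lambda>s. a * (exp s - 1) / (1 - a * exp s) - a * s"])
    fix y :: real assume y: "0 \<le> y" "y \<le> t"
    have "a * exp y \<le> a * exp t" using y a by simp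
    hence p: "0 < 1 - a * exp y" "a * exp y < 1" using t by simp_all
    show "((\<lambda>s. F a s - a * s^2/2) has_real_derivative a * (exp y - 1) / (1 - a * exp y) - a * y) (at y)"
      using F_deriv[OF p(2)]
      by (auto intro!: derivative_eq_intros simp: power2_eq_square)
    have "a * (exp y - 1) / (1 - a * exp y) \<ge> a * (exp y - 1)"
    proof -
      have "0 \<le> a * (exp y - 1)" using a y by simp
      moreover have "1 - a * exp y \<le> 1" using a by simp
      ultimately show ?thesis using p by (simp add: le_divide_eq mult_left_le)
    qed
    moreover have "a * (exp y - 1) \<ge> a * y" proof -
      have "y \<le> exp y - 1" using exp_ge_add_one_self[of y] by linarith
      then show ?thesis using a by (simp add: mult_left_mono)
    qed
    ultimately show "0 \<le> a * (exp y - 1) / (1 - a * exp y) - a * y" by linarith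
  qed
  then show ?thesis by (simp add: F_zero)
qed

lemma G_deriv: assumes "0 < a" "a < 1" "0 \<le> y"
  shows "((\<lambda>v. F a (-v)) has_real_derivative a * (1 - exp (-y)) / (1 - a * exp (-y))) (at y)"
proof -
  have "exp (-y) \<le> 1" using assms by simp
  then have "a * exp (-y) \<le> a" using assms mult_left_le[of "exp (-y)" a] by simp
  then have lt: "a * exp (-y) < 1" using assms by linarith
  have "((\<lambda>v. F a (-v)) has_real_derivative (a*(exp (-y) - 1)/(1 - a*exp (-y))) * (-1)) (at y)"
        apply (rule DERIV_chain2[where f="F a" and g="\<lambda>v. -v"])
    using F_deriv[OF lt] by (auto intro!: derivative_eq_intros)
  moreover have "(a*(exp (-y) - 1)/(1 - a*exp (-y))) * (-1) = a * (1 - exp (-y)) / (1 - a * exp (-y))"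
    by (simp add: field_simps)
  ultimately show ?thesis by simp
qed

lemma F_neg1:
  fixes a v :: real
  assumes a: "0 < a" "a < 1" and v: "0 \<le> v"
  shows "F a (-v) \<ge> a * (v - 1 + exp (-v))"
proof -
  have "(\<lambda>s. F a (-s) - a * (s - 1 + exp (-s))) 0 \<le> (\<lambda>s. F a (-s) - a * (s - 1 + exp (-s))) v"
  proof (rule mono_helper[OF v, where g'="\<lambda>s. a * (1 - exp (-s)) / (1 - a * exp (-s)) - a * (1 - exp (-s))"])
    fix y :: real assume y: "0 \<le> y" "y \<le> v"
    show "((\<lambda>s. F a (-s) - a * (s - 1 + exp (-s))) has_real_derivative a * (1 - exp (-y)) / (1 - a * exp (-y)) - a * (1 - exp (-y))) (at y)"
      using G_deriv[OF a y(1)]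
      by (auto intro!: derivative_eq_intros simp: algebra_simps)
    show "0 \<le> a * (1 - exp (-y)) / (1 - a * exp (-y)) - a * (1 - exp (-y))"
      using frac_ge[OF a, of "exp (-y)"] y by simp
  qed
  then show ?thesis by (simp add: F_zero)
qed

lemma F_neg2:
  fixes a v :: real
  assumes a: "0 < a" "a < 1" and v: "0 \<le> v"
  shows "F a (-v) \<ge> a * (v^2/2 - v^3/6)"
proof -
  have "(\<lambda>s. F a (-s) - a * (s^2/2 - s^3/6)) 0 \<le> (\<lambda>s. F a (-s) - a * (s^2/2 - s^3/6)) v"
  proof (rule mono_helper[OF v, where g'="\<lambda>s. a * (1 - exp (-s)) / (1 - a * exp (-s)) - a * (s - s^2/2)"])
    fix y :: real assume y: "0 \<le> y" "y \<le> v"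
    show "((\<lambda>s. F a (-s) - a * (s^2/2 - s^3/6)) has_real_derivative a * (1 - exp (-y)) / (1 - a * exp (-y)) - a * (y - y^2/2)) (at y)"
      using G_deriv[OF a y(1)]
      by (auto intro!: derivative_eq_intros simp: algebra_simps power2_eq_square power3_eq_cube)
    have "a * (1 - exp (-y)) \<ge> a * (y - y^2/2)" using exp_neg_upper[OF y(1)] a by simp
    then show "0 \<le> a * (1 - exp (-y)) / (1 - a * exp (-y)) - a * (y - y^2/2)"
      using frac_ge[OF a, of "exp (-y)"] y by simp
  qed
  then show ?thesis by (simp add: F_zero)
qed


lemma log_sum:
  fixes Y :: "'a set" and p q :: "'a \<Rightarrow> real"
  assumes "finite Y" "\<forall>y\<in>Y. p y > 0" "\<forall>y\<in>Y. q y > 0"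
    and P: "P = (\<Sum>y\<in>Y. p y)" "P > 0" and Q: "Q = (\<Sum>y\<in>Y. q y)" "Q > 0"
  shows "P * ln (P / Q) \<le> (\<Sum>y\<in>Y. p y * ln (p y / q y))"
proof -
  have k: "p y * ln (P / Q) - p y * ln (p y / q y) \<le> q y * P / Q - p y" if y: "y \<in> Y" for y
  proof -
    have py: "p y > 0" and qy: "q y > 0" using y assms by auto
    have "ln (P / Q) - ln (p y / q y) = ln ((q y * P) / (p y * Q))"
      using py qy P Q by (simp add: ln_div ln_mult)
    also have "\<dots> \<le> (q y * P) / (p y * Q) - 1"
      using py qy P Q by (intro ln_le_minus_one) simp
    finally have "p y * (ln (P / Q) - ln (p y / q y)) \<le> p y * ((q y * P) / (p y * Q) - 1)"
      using py by (simp add: mult_left_mono)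
    also have "\<dots> = q y * P / Q - p y" using py Q by (simp add: field_simps)
    finally show ?thesis by (simp add: algebra_simps)
  qed
  have "(\<Sum>y\<in>Y. p y * ln (P / Q) - p y * ln (p y / q y)) \<le> (\<Sum>y\<in>Y. q y * P / Q - p y)"
    using k by (intro sum_mono) auto
  also have "\<dots> = (\<Sum>y\<in>Y. q y) * P / Q - P"
    using P by (simp add: sum_subtractf sum_divide_distrib[symmetric] sum_distrib_right[symmetric])
  also have "\<dots> = 0" using Q by simp
  finally have "(\<Sum>y\<in>Y. p y * ln (P / Q)) - (\<Sum>y\<in>Y. p y * ln (p y / q y)) \<le> 0"
    by (simp add: sum_subtractf)
  moreover have "(\<Sum>y\<in>Y. p y * ln (P / Q)) = P * ln (P / Q)"
    by (simp add: P(1) sum_distrib_right)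
  ultimately show ?thesis by linarith
qed

theorem lemma1:
  fixes X :: "'a set" and p q r :: "'a \<Rightarrow> real"
    and \<tau> \<gamma>\<^sub>1 \<gamma>\<^sub>2 c\<^sub>1 p\<^sub>m :: real
  assumes "is_pmf_on X p" and "is_pmf_on X q" and "is_pmf_on X r"
    and "c\<^sub>1 = Min ((\<lambda>x. p x * (1 - p x) / (3 * (1 + p x)^2)) ` X)"
    and "p\<^sub>m = Min (p ` X)"
    and "c\<^sub>1 > 0" and "p\<^sub>m > 0"
    and "KL X p q \<le> \<tau>" and "\<tau> \<le> c\<^sub>1"
    and "\<forall>x\<in>X. \<gamma>\<^sub>1 \<le> p x / r x \<and> p x / r x \<le> \<gamma>\<^sub>2"
  shows "\<forall>x\<in>X. \<gamma>\<^sub>1 * exp (- sqrt (3 * \<tau> / p\<^sub>m)) \<le> q x / r x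
               \<and> q x / r x \<le> \<gamma>\<^sub>2 * exp (sqrt (3 * \<tau> / p\<^sub>m))"
proof
  fix x assume xX: "x \<in> X"
  have fin: "finite X" and ppos: "\<forall>y\<in>X. p y > 0" and psum: "(\<Sum>y\<in>X. p y) = 1"
    using assms(1) unfolding is_pmf_on_def by auto
  have qpos: "\<forall>y\<in>X. q y > 0" and qsum: "(\<Sum>y\<in>X. q y) = 1"
    using assms(2) unfolding is_pmf_on_def by auto
  have rpos: "\<forall>y\<in>X. r y > 0"
    using assms(3) unfolding is_pmf_on_def by auto
  define Y where "Y = X - {x}"
  define a where "a = p x"
  define b where "b = q x"
  have a0: "a > 0" using ppos xX a_def by auto
  have b0: "b > 0" using qpos xX b_def by auto
  have finY: "finite Y" using fin Y_def by simp
  have pY: "(\<Sum>y\<in>Y. p y) = 1 - a" using psum sum.remove[OF fin xX, of p] Y_def a_def by simp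
  have qY: "(\<Sum>y\<in>Y. q y) = 1 - b" using qsum sum.remove[OF fin xX, of q] Y_def b_def by simp
  have c1le: "c\<^sub>1 \<le> a * (1 - a) / (3 * (1 + a)^2)"
    using assms(4) fin xX a_def by (auto intro: Min_le)
  have pmle: "p\<^sub>m \<le> a" using assms(5) fin xX a_def by (auto intro: Min_le)
  have Yne: "Y \<noteq> {}"
  proof
    assume "Y = {}"
    then have "a = 1" using pY by simp
    then show False using c1le assms(6) by simp
  qed
  have P0: "1 - a > 0" using pY Yne finY ppos Y_def by (metis DiffD1 sum_pos)
  have Q0: "1 - b > 0" using qY Yne finY qpos Y_def by (metis DiffD1 sum_pos)
  have ls: "(1 - a) * ln ((1 - a) / (1 - b)) \<le> (\<Sum>y\<in>Y. p y * ln (p y / q y))"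
    using log_sum[OF finY _ _ pY[symmetric] P0 qY[symmetric] Q0] ppos qpos Y_def by auto
  have KLs: "KL X p q = a * ln (a / b) + (\<Sum>y\<in>Y. p y * ln (p y / q y))"
    unfolding KL_def using sum.remove[OF fin xX] Y_def a_def b_def by simp
  define t where "t = ln (b / a)"
  have bt: "b = a * exp t" unfolding t_def using a0 b0 by simp
  have Ft: "F a t = a * ln (a / b) + (1 - a) * ln ((1 - a) / (1 - b))"
  proof -
    have "ln (a / b) = - t" unfolding t_def using a0 b0 by (simp add: ln_div)
    moreover have "ln ((1 - a) / (1 - b)) = ln (1 - a) - ln (1 - a * exp t)"
      using P0 Q0 bt by (simp add: ln_div)
    ultimately show ?thesis unfolding F_def by simp
  qed
  have Ftau: "F a t \<le> \<tau>" using Ft ls KLs assms(8) by linarith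
  have a1: "a < 1" using P0 by simp
  have tau_small: "\<tau> < a / 3"
  proof -
    have "(1 + a)^2 \<ge> 1" using a0 by (simp add: one_le_power)
    then have "a * (1 - a) / (3 * (1 + a)^2) \<le> a * (1 - a) / 3"
      using a0 a1 by (intro divide_left_mono) auto
    also have "\<dots> < a / 3" using a0 by simp
    finally show ?thesis using c1le assms(9) by linarith
  qed
  have main: "a * t^2 \<le> 3 * \<tau> \<and> 0 \<le> \<tau>"
  proof (cases "t \<ge> 0")
    case True
    have "a * exp t < 1" using bt Q0 by simp
    then have "a * t^2 / 2 \<le> \<tau>" using F_pos[OF a0 a1 True] Ftau by linarith
    moreover have "0 \<le> a * t^2" using a0 by simp
    ultimately show ?thesis by linarith
  next
    case False
    define v where "v = - t"
    have v0: "v > 0" using False v_def by simp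
    have Fv: "F a (-v) \<le> \<tau>" using Ftau v_def by simp
    consider "v \<le> 1" | "1 < v \<and> v \<le> 2" | "2 < v" by linarith
    then show ?thesis
    proof cases
      case 1
      have h: "a * (v^2/2 - v^3/6) \<le> \<tau>" using F_neg2[OF a0 a1, of v] v0 Fv by linarith
      have "v^2/3 \<le> v^2/2 - v^3/6"
      proof -
        have "0 \<le> v^2 * (1 - v)" using 1 by simp
        then show ?thesis by (simp add: power3_eq_cube power2_eq_square algebra_simps)
      qed
      then have "a * (v^2/3) \<le> a * (v^2/2 - v^3/6)" using a0 by (simp add: mult_left_mono)
      then have "a * v^2 \<le> 3 * \<tau>" using h by linarith
      moreover have "0 \<le> a * v^2" using a0 by simp
      ultimately show ?thesis using v_def by simp
    next
      case 2
      have h: "a * (v^2/2 - v^3/6) \<le> \<tau>" using F_neg2[OF a0 a1, of v] v0 Fv by linarith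
      have "1/3 \<le> v^2/2 - v^3/6"
      proof -
        have "0 \<le> (v - 1) * (2 + v * (2 - v))" using 2 by simp
        then show ?thesis by (simp add: power3_eq_cube power2_eq_square algebra_simps)
      qed
      then have "a * (1/3) \<le> a * (v^2/2 - v^3/6)" using a0 by (simp add: mult_left_mono)
      then show ?thesis using h tau_small by linarith
    next
      case 3
      have h: "a * (v - 1 + exp (-v)) \<le> \<tau>" using F_neg1[OF a0 a1, of v] v0 Fv by linarith
      have "1 \<le> v - 1 + exp (-v)" using 3 by (smt (verit) exp_gt_zero)
      then have "a * 1 \<le> a * (v - 1 + exp (-v))" using a0 by (simp add: mult_left_mono)
      then show ?thesis using h tau_small a0 by linarith
    qed
  qed
  define g where "g = sqrt (3 * \<tau> / p\<^sub>m)"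
  have "t^2 \<le> 3 * \<tau> / a" using main a0 by (simp add: le_divide_eq mult.commute)
  also have "\<dots> \<le> 3 * \<tau> / p\<^sub>m" using main pmle assms(7) by (intro divide_left_mono) auto
  finally have "sqrt (t^2) \<le> g" unfolding g_def by (rule real_sqrt_le_mono)
  then have tg: "\<bar>t\<bar> \<le> g" by simp
  have e1: "exp (-g) \<le> b / a" using tg bt a0 by simp
  have e2: "b / a \<le> exp g" using tg bt a0 by simp
  have rx: "r x > 0" using rpos xX by auto
  have pr: "\<gamma>\<^sub>1 \<le> a / r x" "a / r x \<le> \<gamma>\<^sub>2" using assms(10) xX a_def by auto
  have qr: "q x / r x = (b / a) * (a / r x)" using a0 rx b_def by simp
  have apr: "a / r x > 0" using a0 rx by simp
  have "\<gamma>\<^sub>1 * exp (-g) \<le> (a / r x) * exp (-g)" by (rule mult_right_mono[OF pr(1)]) simp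
  also have "\<dots> \<le> (a / r x) * (b / a)" by (rule mult_left_mono[OF e1]) (use apr in simp)
  finally have L: "\<gamma>\<^sub>1 * exp (-g) \<le> q x / r x" using qr by (metis mult.commute)
  have "q x / r x \<le> (a / r x) * exp g" unfolding qr mult.commute[of "b / a"] by (rule mult_left_mono[OF e2]) (use apr in simp)
  also have "\<dots> \<le> \<gamma>\<^sub>2 * exp g" by (rule mult_right_mono[OF pr(2)]) simp
  finally show "\<gamma>\<^sub>1 * exp (- sqrt (3 * \<tau> / p\<^sub>m)) \<le> q x / r x
               \<and> q x / r x \<le> \<gamma>\<^sub>2 * exp (sqrt (3 * \<tau> / p\<^sub>m))" using L g_def by simp
qed

end
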